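(* Let $t_1>0$ and $c\ge0$. For hyper-exponential service times with $P(v>t)=\sum_{i=1}^k P_i e^{-\mu_i t}$ (where $0<\mu_1<\dots<\mu_k<\infty$, $P_i>0$, $\sum_iP_i=1$), mean $1/\mu$ with $\mu=\left(\sum_{i=1}^k P_i/\mu_i\right)^{-1}$ and variance $\sigma^2=2\sum_{i=1}^k P_i/\mu_i^2-\left(\sum_{i=1}^k P_i/\mu_i\right)^2$, let $\tau=\frac{\mu^2\sigma^2+c^2}{2\mu t_1}$. Compare with exponential service times with the same mean $1/\mu$, for which the corresponding constant is $\frac{1+c^2}{2\mu t_1}$. Then $$\tau\ge\frac{1+c^2}{2\mu t_1};$$ consequently, for two GI/H/n systems (one with the hyper-exponential, one with the exponential service time, both with arrival coefficient of variation $c$) having the same $t_1$, $\mu$, and the same sequences $\rho_n$ and $\delta_n$ satisfying $\lim\rho_n=1$, $\lim P\{Q_n\ge n\}=1$ and $P\{W_n>t_1\}\sim\delta_n$ with $\delta_n\to0$, the system with hyper-exponential service time needs a larger number of servers than the one with exponential service time.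
   Context: GI/H/n model: a queueing system with $n$ identical servers and a single unbounded buffer served in first-come-first-served order; inter-arrival times are i.i.d. with rate $\lambda_n$ and coefficient of variation $c$; service times are i.i.d. and independent of arrivals; $\rho_n=\lambda_n/(n\mu)$. $Q_n$ is the steady-state number of jobs in the system and $W_n$ the steady-state waiting time before service, with $n$ servers. In this setting (for $\delta_n\to0$, $\delta_n>0$) the three conditions $\rho_n\to1$, $P\{Q_n\ge n\}\to1$, $P\{W_n>t_1\}\sim\delta_n$ are equivalent to $\lim_{n}\frac{(1-\rho_n)n}{-\ln\delta_n}=\tau_*$ together with $\delta_n e^{k'\sqrt n}\to\infty$ for all $k'>0$, where $\tau_*=\frac{\mu^2\sigma^2+c^2}{2\mu t_1}$ with $\sigma^2$ the service-time variance; for exponential service $\tau_*=\frac{1+c^2}{2\mu t_1}$. $f(n)\sim g(n)$ means $f(n)/g(n)\to1$. *)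

theory Defs
  imports Complex_Main
begin

text \<open>Hyper-exponential service time with tail P(v>t) = sum_{i=1..k} P_i exp(-mu_i t).
  Phases indexed by {1..k}.\<close>

definition hyperexp_rate :: "nat \<Rightarrow> (nat \<Rightarrow> real) \<Rightarrow> (nat \<Rightarrow> real) \<Rightarrow> real" where
  "hyperexp_rate k P mu = inverse (\<Sum>i=1..k. P i / mu i)"

definition hyperexp_variance :: "nat \<Rightarrow> (nat \<Rightarrow> real) \<Rightarrow> (nat \<Rightarrow> real) \<Rightarrow> real" where
  "hyperexp_variance k P mu = 2 * (\<Sum>i=1..k. P i / (mu i)^2) - (\<Sum>i=1..k. P i / mu i)^2"

definition tau_star :: "real \<Rightarrow> real \<Rightarrow> real \<Rightarrow> real \<Rightarrow> real" where
  "tau_star mu sigma2 c t1 = (mu^2 * sigma2 + c^2) / (2 * mu * t1)"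

end

theory Submission
  imports Defs
begin

theorem corollary13:
  fixes k :: nat and P mu :: "nat \<Rightarrow> real" and t1 c :: real
  assumes "t1 > 0" and "c \<ge> 0"
    and "k \<ge> 1"
    and "0 < mu 1"
    and "\<And>i j. 1 \<le> i \<Longrightarrow> i < j \<Longrightarrow> j \<le> k \<Longrightarrow> mu i < mu j"
    and "\<And>i. 1 \<le> i \<Longrightarrow> i \<le> k \<Longrightarrow> P i > 0"
    and "(\<Sum>i=1..k. P i) = 1"
  shows "tau_star (hyperexp_rate k P mu) (hyperexp_variance k P mu) c t1
           \<ge> (1 + c^2) / (2 * hyperexp_rate k P mu * t1)"
proof -
  have mupos: "mu i > 0" if "1 \<le> i" "i \<le> k" for i
  proof (cases "i = 1")
    case True then show ?thesis using assms(4) by simp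
  next
    case False then show ?thesis using assms(4) assms(5)[of 1 i] that by simp
  qed
  define m where "m = (\<Sum>i=1..k. P i / mu i)"
  define s where "s = (\<Sum>i=1..k. P i / (mu i)^2)"
  have mpos: "m > 0" unfolding m_def
    by (rule sum_pos) (use assms(3) assms(6) mupos in auto)
  have "0 \<le> (\<Sum>i=1..k. P i * (1 / mu i - m)^2)"
    by (rule sum_nonneg) (simp add: assms(6) less_imp_le)
  also have "\<dots> = (\<Sum>i=1..k. P i / (mu i)^2 - 2 * m * (P i / mu i) + m^2 * P i)"
    proof (rule sum.cong)
    fix x assume "x \<in> {1..k}"
    then have "mu x \<noteq> 0" using mupos by (metis atLeastAtMost_iff less_irrefl)
    then show "P x * (1 / mu x - m)^2 = P x / (mu x)^2 - 2 * m * (P x / mu x) + m^2 * P x"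
      by (simp add: power2_eq_square field_simps)
  qed simp
  also have "\<dots> = s - 2 * m * m + m^2 * 1"
    unfolding s_def m_def sum.distrib sum_subtractf sum_distrib_left[symmetric] assms(7)
    by simp
  finally have sm: "s \<ge> m^2" by (simp add: power2_eq_square)
  define r where "r = hyperexp_rate k P mu"
  have r: "r = 1 / m" unfolding r_def hyperexp_rate_def m_def by (simp add: field_simps)
  have rpos: "r > 0" using r mpos by simp
  have v: "hyperexp_variance k P mu = 2 * s - m^2"
    unfolding hyperexp_variance_def s_def m_def by simp
  have key: "r^2 * (2 * s - m^2) \<ge> 1"
    using sm mpos unfolding r by (simp add: field_simps power2_eq_square)
  have "(1 + c^2) / (2 * r * t1) \<le> (r^2 * (2 * s - m^2) + c^2) / (2 * r * t1)"
    by (rule divide_right_mono) (use key rpos assms(1) in auto)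
  then show ?thesis unfolding tau_star_def v r_def[symmetric] .
qed

end
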